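(* Let $n\geq 2$. The structure $(\mathbb{Q}^n,<,<_{\mathrm{lex}_1},\ldots,<_{\mathrm{lex}_n})$ is not ultrahomogeneous.
   Context: On $\mathbb{Q}^n$, $<$ is the product order ($\mathbf{a}<\mathbf{b}$ iff $a_i\leq b_i$ for all $i$ and $\mathbf{a}\neq\mathbf{b}$). For $i\leq n$, let $\sigma_i$ be the cyclic permutation of $\{1,\ldots,n\}$ listing $i,i+1,\ldots,n,1,\ldots,i-1$ (so $\sigma_i(1)=i$), and define the $i$th lexicographic order by $\mathbf{a}<_{\mathrm{lex}_i}\mathbf{b}$ iff there is $k\leq n$ with $a_{\sigma_i(j)}=b_{\sigma_i(j)}$ for all $j<k$ and $a_{\sigma_i(k)}<b_{\sigma_i(k)}$. A structure is ultrahomogeneous if every isomorphism between finite substructures (preserving and reflecting all relations) extends to an automorphism. *)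

theory Defs
  imports Complex_Main
begin

text \<open>Q^n is represented by functions nat => rat vanishing at all indices >= n;
coordinates are indexed 0..n-1 (paper: 1..n).\<close>

definition Qn :: "nat \<Rightarrow> (nat \<Rightarrow> rat) set" where
  "Qn n = {a. \<forall>i\<ge>n. a i = 0}"

definition prod_less :: "nat \<Rightarrow> (nat \<Rightarrow> rat) \<Rightarrow> (nat \<Rightarrow> rat) \<Rightarrow> bool" where
  "prod_less n a b \<longleftrightarrow> (\<forall>i<n. a i \<le> b i) \<and> a \<noteq> b"

text \<open>The i-th lexicographic order (0 <= i < n): coordinates compared in the
cyclic order i, i+1, ..., n-1, 0, ..., i-1, i.e. sigma_i(j) = (i + j) mod n
for j = 0..n-1.\<close>
definition lex_less :: "nat \<Rightarrow> nat \<Rightarrow> (nat \<Rightarrow> rat) \<Rightarrow> (nat \<Rightarrow> rat) \<Rightarrow> bool" where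
  "lex_less n i a b \<longleftrightarrow>
     (\<exists>k<n. (\<forall>j<k. a ((i + j) mod n) = b ((i + j) mod n)) \<and>
            a ((i + k) mod n) < b ((i + k) mod n))"

definition rel :: "nat \<Rightarrow> nat option \<Rightarrow> (nat \<Rightarrow> rat) \<Rightarrow> (nat \<Rightarrow> rat) \<Rightarrow> bool" where
  "rel n r = (case r of None \<Rightarrow> prod_less n | Some i \<Rightarrow> lex_less n i)"

definition rel_idx :: "nat \<Rightarrow> nat option set" where
  "rel_idx n = insert None (Some ` {..<n})"

definition pres_refl :: "nat \<Rightarrow> ((nat \<Rightarrow> rat) \<Rightarrow> (nat \<Rightarrow> rat)) \<Rightarrow> (nat \<Rightarrow> rat) set \<Rightarrow> bool" where
  "pres_refl n f A \<longleftrightarrow>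
     (\<forall>r\<in>rel_idx n. \<forall>a\<in>A. \<forall>b\<in>A. rel n r (f a) (f b) \<longleftrightarrow> rel n r a b)"

definition ultrahomogeneous_Qn :: "nat \<Rightarrow> bool" where
  "ultrahomogeneous_Qn n \<longleftrightarrow>
     (\<forall>A f. finite A \<and> A \<subseteq> Qn n \<and> f ` A \<subseteq> Qn n \<and> inj_on f A \<and> pres_refl n f A \<longrightarrow>
        (\<exists>g. bij_betw g (Qn n) (Qn n) \<and> pres_refl n g (Qn n) \<and> (\<forall>a\<in>A. g a = f a)))"

end

theory Submission
  imports Defs
begin

lemma lex_asym:
  assumes "lex_less n i x y" shows "\<not> lex_less n i y x"
proof
  assume "lex_less n i y x"
  then obtain k' where k': "k' < n" "\<forall>j<k'. y ((i + j) mod n) = x ((i + j) mod n)"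
      "y ((i + k') mod n) < x ((i + k') mod n)" unfolding lex_less_def by blast
  from assms obtain k where k: "k < n" "\<forall>j<k. x ((i + j) mod n) = y ((i + j) mod n)"
      "x ((i + k) mod n) < y ((i + k) mod n)" unfolding lex_less_def by blast
  show False
  proof (cases k k' rule: linorder_cases)
    case less then show ?thesis using k k' by force
  next
    case equal then show ?thesis using k k' by force
  next
    case greater then show ?thesis using k k' by force
  qed
qed

lemma lex_irrefl: "\<not> lex_less n i x x"
  using lex_asym by blast

lemma prod_irrefl: "\<not> prod_less n x x"
  unfolding prod_less_def by simp

lemma lex_pos:
  assumes "i < n" "\<forall>j<n. x j \<le> y j" "j0 < n" "x j0 \<noteq> y j0"
  shows "lex_less n i x y"
proof -
  define P where "P k = (k < n \<and> x ((i + k) mod n) \<noteq> y ((i + k) mod n))" for k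
  have "(i + (j0 + n - i) mod n) mod n = j0"
  proof -
    have "(i + (j0 + n - i) mod n) mod n = (i + (j0 + n - i)) mod n"
      by (simp add: mod_add_right_eq)
    also have "i + (j0 + n - i) = j0 + n" using assms(1) by simp
    finally show ?thesis using assms(3) by simp
  qed
  then have "P ((j0 + n - i) mod n)" unfolding P_def using assms by auto
  then have PL: "P (LEAST k. P k)" by (rule LeastI)
  have "\<forall>j<(LEAST k. P k). x ((i + j) mod n) = y ((i + j) mod n)"
  proof (intro allI impI)
    fix j assume "j < (LEAST k. P k)"
    then have "\<not> P j" using not_less_Least by blast
    moreover have "j < n" using PL \<open>j < (LEAST k. P k)\<close> unfolding P_def by simp
    ultimately show "x ((i + j) mod n) = y ((i + j) mod n)" unfolding P_def by simp
  qed
  moreover have "x ((i + (LEAST k. P k)) mod n) < y ((i + (LEAST k. P k)) mod n)"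
  proof -
    have "(i + (LEAST k. P k)) mod n < n" using assms(1) by simp
    then have "x ((i + (LEAST k. P k)) mod n) \<le> y ((i + (LEAST k. P k)) mod n)" using assms(2) by blast
    moreover have "x ((i + (LEAST k. P k)) mod n) \<noteq> y ((i + (LEAST k. P k)) mod n)" using PL unfolding P_def by blast
    ultimately show ?thesis by simp
  qed
  ultimately show ?thesis unfolding lex_less_def using PL unfolding P_def by blast
qed

lemma lex1_between:
  assumes n: "n \<ge> 2" and c: "c \<in> Qn n" and bdef: "\<And>i. e i = (if i = 0 then 1 else 0)"
    and h1: "lex_less n 1 (\<lambda>_. 0) c" and h2: "lex_less n 1 c e"
  shows "c 0 < 1"
proof -
  have md: "(1 + j) mod n = 1 + j" if "j < n - 1" for j using that n by simp
  have mdl: "(1 + j) mod n = 0" if "j = n - 1" for j using that n by simp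
  obtain k' where k': "k' < n" "\<forall>j<k'. c ((1 + j) mod n) = e ((1 + j) mod n)"
      "c ((1 + k') mod n) < e ((1 + k') mod n)" using h2 unfolding lex_less_def by blast
  obtain k where k: "k < n" "\<forall>j<k. 0 = c ((1 + j) mod n)"
      "0 < c ((1 + k) mod n)" using h1 unfolding lex_less_def by blast
  show ?thesis
  proof (cases "k' < n - 1")
    case True
    have "e (1 + k') = 0" using bdef by simp
    then have k'3: "c (1 + k') < 0" using k'(3) md[OF True] by simp
    show ?thesis
    proof (cases k k' rule: linorder_cases)
      case less
      then have "k < n - 1" using True by simp
      have e1: "(1 + k) mod n = 1 + k" using md[OF \<open>k < n - 1\<close>] .
      have "c ((1 + k) mod n) = e ((1 + k) mod n)" using k'(2) less by blast
      moreover have "e (1 + k) = 0" using bdef by simp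
      ultimately have "c (1 + k) = 0" using e1 by simp
      then show ?thesis using k(3) e1 by simp
    next
      case equal then show ?thesis using k(3) k'3 md[OF True] by simp
    next
      case greater
      then have "0 = c ((1 + k') mod n)" using k(2) by blast
      then show ?thesis using k'3 md[OF True] by simp
    qed
  next
    case False
    then have "k' = n - 1" using k' by simp
    moreover have "e 0 = 1" using bdef by simp
    ultimately show ?thesis using k'(3) mdl by simp
  qed
qed

theorem proposition3p4:
  fixes n :: nat
  assumes "n \<ge> 2"
  shows "\<not> ultrahomogeneous_Qn n"
proof
  assume U: "ultrahomogeneous_Qn n"
  define z :: "nat \<Rightarrow> rat" where "z = (\<lambda>_. 0)"
  define b :: "nat \<Rightarrow> rat" where "b = (\<lambda>i. if i = 0 then 1 else 0)"
  define b' :: "nat \<Rightarrow> rat" where "b' = (\<lambda>i. if i < 2 then 1 else 0)"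
  define c' :: "nat \<Rightarrow> rat" where "c' = (\<lambda>i. if i = 0 then 2 else if i = 1 then 1/2 else 0)"
  define f where "f = (\<lambda>x. if x = b then b' else x)"
  have zb: "z \<noteq> b" unfolding z_def b_def by (metis zero_neq_one)
  have zb': "z \<noteq> b'" unfolding z_def b'_def by (metis zero_neq_one zero_less_numeral)
  have fz: "f z = z" and fb: "f b = b'" unfolding f_def using zb by auto
  have inQ: "z \<in> Qn n" "b \<in> Qn n" "b' \<in> Qn n" "c' \<in> Qn n"
    unfolding Qn_def z_def b_def b'_def c'_def using assms by auto
  have zlb: "rel n r z b" if "r \<in> rel_idx n" for r
  proof (cases r)
    case None then show ?thesis unfolding rel_def prod_less_def z_def b_def using zb
      by (auto simp: z_def b_def)
  next
    case (Some i) then have "i < n" using that unfolding rel_idx_def by auto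
    then show ?thesis unfolding rel_def Some
      by (auto intro!: lex_pos[of _ _ _ _ 0] simp: z_def b_def)
  qed
  have zlb': "rel n r z b'" if "r \<in> rel_idx n" for r
  proof (cases r)
    case None then show ?thesis unfolding rel_def prod_less_def using zb'
      by (auto simp: z_def b'_def)
  next
    case (Some i) then have "i < n" using that unfolding rel_idx_def by auto
    then show ?thesis unfolding rel_def Some
      by (auto intro!: lex_pos[of _ _ _ _ 0] simp: z_def b'_def)
  qed
  have nbz: "\<not> rel n r b z" if "r \<in> rel_idx n" for r
  proof (cases r)
    case None then show ?thesis unfolding rel_def prod_less_def using assms
      by (auto simp: z_def b_def)
  next
    case (Some i) then show ?thesis using zlb[OF that] lex_asym unfolding rel_def by auto
  qed
  have nb'z: "\<not> rel n r b' z" if "r \<in> rel_idx n" for r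
  proof (cases r)
    case None then show ?thesis unfolding rel_def prod_less_def using assms
      by (auto simp: z_def b'_def)
  next
    case (Some i) then show ?thesis using zlb'[OF that] lex_asym unfolding rel_def by auto
  qed
  have irr: "\<not> rel n r x x" for r x
    by (cases r) (auto simp: rel_def prod_irrefl lex_irrefl)
  have pr: "pres_refl n f {z, b}"
    unfolding pres_refl_def using fz fb zlb zlb' nbz nb'z irr by auto
  have inj: "inj_on f {z, b}" using fz fb zb' zb by auto
  obtain g where g: "bij_betw g (Qn n) (Qn n)" "pres_refl n g (Qn n)" "\<forall>a\<in>{z, b}. g a = f a"
    using U pr inj inQ fz fb unfolding ultrahomogeneous_Qn_def
    by (metis (no_types, lifting) empty_subsetI finite.emptyI finite.insertI image_empty image_insert insert_subset)
  have gz: "g z = z" and gb: "g b = b'" using g(3) fz fb by auto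
  obtain c where c: "c \<in> Qn n" "g c = c'" using g(1) inQ(4) unfolding bij_betw_def by (metis imageE)
  have r1: "Some 1 \<in> rel_idx n" "Some 0 \<in> rel_idx n" using assms unfolding rel_idx_def by auto
  have m1: "1 mod n = 1" using assms by simp
  have "lex_less n 1 z c'" unfolding lex_less_def
    by (rule exI[where x=0]) (use assms m1 in \<open>auto simp: z_def c'_def\<close>)
  then have h1: "lex_less n 1 z c"
    using g(2) r1 c inQ gz unfolding pres_refl_def rel_def by force
  have "lex_less n 1 c' b'" unfolding lex_less_def
    by (rule exI[where x=0]) (use assms m1 in \<open>auto simp: b'_def c'_def\<close>)
  then have h2: "lex_less n 1 c b"
    using g(2) r1 c inQ gb unfolding pres_refl_def rel_def by force
  have "c 0 < 1" using lex1_between[OF assms c(1) _ h1[unfolded z_def] h2] by (simp add: b_def)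
  then have "lex_less n 0 c b" unfolding lex_less_def
    by (intro exI[where x=0]) (use assms in \<open>auto simp: b_def\<close>)
  then have "lex_less n 0 c' b'"
    using g(2) r1 c inQ gb unfolding pres_refl_def rel_def by force
  then obtain k where k: "k < n" "\<forall>j<k. c' ((0 + j) mod n) = b' ((0 + j) mod n)"
      "c' ((0 + k) mod n) < b' ((0 + k) mod n)" unfolding lex_less_def by blast
  show False
  proof (cases "k = 0")
    case True then show ?thesis using k(3) assms by (simp add: c'_def b'_def)
  next
    case False then have "c' 0 = b' 0" using k(2) assms by (metis add_0 gr0I mod_0)
    then show ?thesis by (simp add: c'_def b'_def)
  qed
qed

end
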